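(* Let $p$ be an odd prime with $p\equiv 5\pmod 8$. Then there exists a perfect $B[-1,3](p)$ set if and only if $6$ is a quartic residue modulo $p$, i.e. there is an integer $x$ with $x^4\equiv 6\pmod p$.
   Context: A set $B\subseteq\mathbb{Z}_p$ is a perfect $B[-1,3](p)$ set if every nonzero element of $\mathbb{Z}_p$ has a unique representation $ab \bmod p$ with $a\in\{-1,1,2,3\}$ and $b\in B$ (and $0$ has no such representation); equivalently $B\subseteq\mathbb{Z}_p^\ast$, $|B|=(p-1)/4$, and the sets $\{-b,b,2b,3b\}$, $b\in B$, partition $\mathbb{Z}_p^\ast=\mathbb{Z}_p\setminus\{0\}$. *)

theory Defs
  imports "HOL-Number_Theory.Number_Theory"
begin

text \<open>Elements of Z_p are represented by their canonical representatives in {0..<p}.\<close>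

definition perfect_B_m13 :: "int \<Rightarrow> int set \<Rightarrow> bool" where
  "perfect_B_m13 p B \<longleftrightarrow>
     B \<subseteq> {0..<p} \<and>
     (\<forall>y \<in> {1..<p}. \<exists>!(a, b). a \<in> {-1, 1, 2, 3} \<and> b \<in> B \<and> (a * b) mod p = y) \<and>
     (\<forall>a \<in> {-1, 1, 2, 3}. \<forall>b \<in> B. (a * b) mod p \<noteq> 0)"

end

theory Submission
  imports Defs
begin

lemma generator:
  fixes p :: int assumes "prime p"
  obtains g :: int where "\<And>i j. [g^i = g^j] (mod p) \<longleftrightarrow> [i = j] (mod (nat p - 1))"
    "\<And>x. \<not> p dvd x \<Longrightarrow> \<exists>i < nat p - 1. [g^i = x] (mod p)"
proof -
  define q where "q = nat p"
  have p1: "p > 1" using assms prime_gt_1_int by blast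
  have pq: "p = int q" using p1 q_def by simp
  have q: "prime q" using assms pq by simp
  obtain g0 where g0: "residue_primroot q g0" using prime_primitive_root_exists[OF _ q] q prime_gt_1_nat by blast
  have cop: "coprime q g0" and ordq: "ord q g0 = q - 1"
    using g0 q by (auto simp: residue_primroot_def totient_prime)
  show ?thesis
  proof (rule that[of "int g0"])
    fix i j :: nat
    have "[int g0^i = int g0^j] (mod p) \<longleftrightarrow> [g0^i = g0^j] (mod q)"
      unfolding pq by (metis cong_int_iff of_nat_power)
    also have "\<dots> \<longleftrightarrow> [i = j] (mod ord q g0)" using order_divides_expdiff[OF cop] .
    finally show "[int g0^i = int g0^j] (mod p) \<longleftrightarrow> [i = j] (mod (nat p - 1))"
      using ordq q_def by simp
  next
    fix x :: int assume nd: "\<not> p dvd x"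
    define y where "y = nat (x mod p)"
    have yx: "int y = x mod p" using p1 y_def by simp
    have "y \<in> totatives q"
    proof -
      have "x mod p \<noteq> 0" using nd by (simp add: dvd_eq_mod_eq_0)
      moreover have "x mod p \<ge> 0" using p1 by simp
      ultimately have "0 < y" using yx by linarith
      moreover have "y \<le> q" using yx pq p1 pos_mod_bound[of p x] by linarith
      moreover have "coprime y q"
      proof -
        have "coprime x p" using nd assms by (simp add: prime_imp_coprime coprime_commute)
        hence "coprime (x mod p) p" using p1 by (simp add: coprime_mod_left_iff)
        thus ?thesis using yx pq by (metis coprime_int_iff)
      qed
      ultimately show ?thesis by (simp add: totatives_def)
    qed
    moreover have "(\<lambda>i. g0 ^ i mod q) ` {..<totient q} = totatives q"
      using residue_primroot_is_generator[of q g0] g0 q prime_gt_1_nat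
      by (simp add: bij_betw_def)
    ultimately obtain i where i: "i < totient q" "g0 ^ i mod q = y" by force
    have "int g0 ^ i mod p = x mod p" using i(2) yx pq by (metis of_nat_mod of_nat_power)
    thus "\<exists>i < nat p - 1. [int g0^i = x] (mod p)"
      using i(1) q q_def totient_prime by (auto simp: cong_def)
  qed
qed

lemma two_nonres:
  fixes p k :: int assumes "prime p" "p = 8*k+5"
  shows "[2 ^ nat (4*k+2) = -1] (mod p)"
proof -
  have k0: "k \<ge> 0" using assms prime_gt_1_int[of p] by linarith
  interpret G: GAUSS "nat p" 2
    apply unfold_locales
    using assms k0 apply (auto simp: cong_def)
    done
  have pp: "int (nat p) = p" using k0 assms by simp
  have h: "(int (nat p) - 1) div 2 = 4*k+2" using pp assms by simp
  have E: "G.E = (\<lambda>x. x*2) ` {2*k+2..4*k+2}"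
  proof -
    have C: "G.C = (\<lambda>x. x*2) ` {1..4*k+2}"
    proof -
      have "\<And>x. x \<in> {1..4*k+2} \<Longrightarrow> (x*2) mod p = x*2"
        using assms by auto
      moreover have "G.A = {1..4*k+2}" unfolding G.A_def h by auto
      ultimately have "G.C = (\<lambda>x. (x*2) mod p) ` {1..4*k+2}"
        unfolding G.C_def G.B_def pp by (simp add: image_image)
      also have "\<dots> = (\<lambda>x. x*2) ` {1..4*k+2}"
        using \<open>\<And>x. x \<in> {1..4*k+2} \<Longrightarrow> (x*2) mod p = x*2\<close> by (auto intro!: image_cong)
      finally show ?thesis .
    qed
    show ?thesis unfolding G.E_def C h by force
  qed
  have "card G.E = 2 * nat k + 1"
  proof -
    have "card G.E = card {2*k+2..4*k+2}" unfolding E by (rule card_image) (auto simp: inj_on_def)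
    thus ?thesis using k0 by simp
  qed
  hence "(-1::int) ^ card G.E = -1" by simp
  moreover have "nat ((int (nat p) - 1) div 2) = nat (4*k+2)" using h by simp
  ultimately show ?thesis using G.pre_gauss_lemma pp by metis
qed

lemma one_rep:
  fixes p y :: int and c :: "int \<Rightarrow> int"
  assumes perf: "perfect_B_m13 p B" and p0: "p > 0" and y: "y \<in> {1..<p}"
    and inv: "\<And>a. a \<in> {-1,1,2,3} \<Longrightarrow> [a * c a = 1] (mod p)"
  shows "\<exists>!a. a \<in> {-1,1,2,3} \<and> (c a * y) mod p \<in> B"
proof -
  have Bp: "B \<subseteq> {0..<p}" using perf by (simp add: perfect_B_m13_def)
  have "\<exists>!(a, b). a \<in> {-1, 1, 2, 3} \<and> b \<in> B \<and> (a * b) mod p = y"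
    using perf y by (simp add: perfect_B_m13_def)
  then obtain ab where ab: "case ab of (a, b) \<Rightarrow> a \<in> {-1, 1, 2, 3} \<and> b \<in> B \<and> (a * b) mod p = y"
     and U: "\<And>z. (case z of (a, b) \<Rightarrow> a \<in> {-1, 1, 2, 3} \<and> b \<in> B \<and> (a * b) mod p = y) \<Longrightarrow> z = ab"
    by (elim ex1E) blast
  obtain a0 b0 where abe: "ab = (a0, b0)" by (cases ab)
  have ab0: "a0 \<in> {-1, 1, 2, 3}" "b0 \<in> B" "(a0 * b0) mod p = y" using ab abe by auto
  have uniq: "\<And>a b. a \<in> {-1, 1, 2, 3} \<Longrightarrow> b \<in> B \<Longrightarrow> (a * b) mod p = y \<Longrightarrow> a = a0 \<and> b = b0"
  proof -
    fix a b assume "a \<in> {-1, 1, 2, 3}" "b \<in> B" "(a * b) mod p = y"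
    hence "(a, b) = ab" using U[of "(a,b)"] by simp
    thus "a = a0 \<and> b = b0" using abe by simp
  qed
  show ?thesis
  proof (rule ex1I[of _ a0])
    have "[c a0 * y = c a0 * (a0 * b0)] (mod p)" unfolding cong_def using ab0(3) by (metis mod_mult_right_eq)
    moreover have "[c a0 * (a0 * b0) = 1 * b0] (mod p)"
      using inv[OF ab0(1)] by (metis cong_scalar_right mult.assoc mult.commute)
    ultimately have "(c a0 * y) mod p = b0 mod p" by (simp add: cong_def)
    also have "\<dots> = b0" using Bp ab0(2) by auto
    finally show "a0 \<in> {-1,1,2,3} \<and> (c a0 * y) mod p \<in> B" using ab0 by simp
  next
    fix a assume a: "a \<in> {-1,1,2,3} \<and> (c a * y) mod p \<in> B"
    have "[a * ((c a * y) mod p) = (a * c a) * y] (mod p)" by (simp add: cong_def mod_mult_right_eq mult.assoc)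
    moreover have "[(a * c a) * y = 1 * y] (mod p)" using inv a by (meson cong_scalar_right)
    ultimately have "(a * ((c a * y) mod p)) mod p = y mod p" by (simp add: cong_def)
    also have "\<dots> = y" using y by simp
    finally show "a = a0" using uniq a by blast
  qed
qed

lemma exactly:
  fixes p x i2 i3 :: int
  assumes perf: "perfect_B_m13 p B" and p0: "p > 0" and i2: "[2*i2 = 1] (mod p)"
    and i3: "[3*i3 = 1] (mod p)" and x: "\<not> p dvd x"
  shows "(-x) mod p \<in> B \<or> x mod p \<in> B \<or> (i2*x) mod p \<in> B \<or> (i3*x) mod p \<in> B"
    and "\<not> ((-x) mod p \<in> B \<and> x mod p \<in> B)"
    and "\<not> ((-x) mod p \<in> B \<and> (i2*x) mod p \<in> B)"
    and "\<not> ((-x) mod p \<in> B \<and> (i3*x) mod p \<in> B)"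
    and "\<not> (x mod p \<in> B \<and> (i2*x) mod p \<in> B)"
    and "\<not> (x mod p \<in> B \<and> (i3*x) mod p \<in> B)"
    and "\<not> ((i2*x) mod p \<in> B \<and> (i3*x) mod p \<in> B)"
proof -
  define c :: "int \<Rightarrow> int" where "c a = (if a = -1 then -1 else if a = 1 then 1 else if a = 2 then i2 else i3)" for a
  have inv: "\<And>a. a \<in> {-1,1,2,3} \<Longrightarrow> [a * c a = 1] (mod p)"
    using i2 i3 by (auto simp: c_def)
  have "x mod p \<noteq> 0" using x by (simp add: dvd_eq_mod_eq_0)
  hence y: "x mod p \<in> {1..<p}" using pos_mod_sign[OF p0, of x] pos_mod_bound[OF p0, of x] by simp
  have "\<exists>!a. a \<in> {-1,1,2,3} \<and> (c a * (x mod p)) mod p \<in> B"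
    by (rule one_rep[OF perf p0 y inv])
  hence E: "\<exists>!a. a \<in> {-1,1,2,3} \<and> (c a * x) mod p \<in> B" by (simp add: mod_mult_right_eq)
  define Q where "Q a = ((c a * x) mod p \<in> B)" for a
  have ex: "Q (-1) \<or> Q 1 \<or> Q 2 \<or> Q 3" using E unfolding Q_def by blast
  have un: "\<And>a a'. a \<in> {-1,1,2,3} \<Longrightarrow> a' \<in> {-1,1,2,3} \<Longrightarrow> Q a \<Longrightarrow> Q a' \<Longrightarrow> a = a'"
    using E unfolding Q_def by blast
  have q: "Q (-1) = ((-x) mod p \<in> B)" "Q 1 = (x mod p \<in> B)" "Q 2 = ((i2*x) mod p \<in> B)"
    "Q 3 = ((i3*x) mod p \<in> B)" by (auto simp: Q_def c_def)
  show "(-x) mod p \<in> B \<or> x mod p \<in> B \<or> (i2*x) mod p \<in> B \<or> (i3*x) mod p \<in> B"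
    using ex q by simp
  show "\<not> ((-x) mod p \<in> B \<and> x mod p \<in> B)" using un[of "-1" 1] q by auto
  show "\<not> ((-x) mod p \<in> B \<and> (i2*x) mod p \<in> B)" using un[of "-1" 2] q by auto
  show "\<not> ((-x) mod p \<in> B \<and> (i3*x) mod p \<in> B)" using un[of "-1" 3] q by auto
  show "\<not> (x mod p \<in> B \<and> (i2*x) mod p \<in> B)" using un[of 1 2] q by auto
  show "\<not> (x mod p \<in> B \<and> (i3*x) mod p \<in> B)" using un[of 1 3] q by auto
  show "\<not> ((i2*x) mod p \<in> B \<and> (i3*x) mod p \<in> B)" using un[of 2 3] q by auto
qed

lemma flip:
  fixes p y i2 i3 :: int
  assumes perf: "perfect_B_m13 p B" and pr: "prime p" and p3: "p > 3" and i2: "[2*i2 = 1] (mod p)"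
    and i3: "[3*i3 = 1] (mod p)" and y: "\<not> p dvd y"
  shows "(2*i3*y) mod p \<in> B \<longleftrightarrow> (-y) mod p \<in> B"
proof -
  have p0: "p > 0" using p3 by simp
  have n2: "\<not> p dvd 2" using p3 zdvd_imp_le[of p 2] by linarith
  have ni3: "\<not> p dvd i3"
  proof
    assume "p dvd i3" hence "p dvd 3*i3" by simp
    hence "p dvd 1" using i3 by (metis cong_dvd_iff)
    thus False using p3 by simp
  qed
  have d2y: "\<not> p dvd 2*y" using n2 y pr by (simp add: prime_dvd_mult_iff)
  have dm2y: "\<not> p dvd -(2*y)" using d2y by simp
  have dv: "\<not> p dvd 2*i3*y" using n2 y ni3 pr by (simp add: prime_dvd_mult_iff)
  have m1: "(i2*(2*y)) mod p = y mod p"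
  proof -
    have "[i2*2*y = 1*y] (mod p)" using i2 by (metis cong_scalar_right mult.commute)
    thus ?thesis by (simp add: cong_def mult.assoc)
  qed
  have m2: "(i2*(-(2*y))) mod p = (-y) mod p"
  proof -
    have "[i2*2*(-y) = 1*(-y)] (mod p)" using i2 by (metis cong_scalar_right mult.commute)
    thus ?thesis by (simp add: cong_def mult.assoc)
  qed
  have e3: "i3*(2*y) = 2*i3*y" "i3*(-(2*y)) = -(2*i3*y)" by simp_all
  note A = exactly[OF perf p0 i2 i3 d2y] and Bm = exactly[OF perf p0 i2 i3 dm2y]
    and Cc = exactly[OF perf p0 i2 i3 y] and Dd = exactly[OF perf p0 i2 i3 dv]
  define a where "a = ((2*y) mod p \<in> B)"
  define b where "b = ((-(2*y)) mod p \<in> B)"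
  define c where "c = (y mod p \<in> B)"
  define d where "d = ((2*i3*y) mod p \<in> B)"
  define e where "e = ((-y) mod p \<in> B)"
  define f where "f = ((-(2*i3*y)) mod p \<in> B)"
  have h1: "b \<or> a \<or> c \<or> d" using A(1) unfolding m1 e3 a_def b_def c_def d_def .
  have h2: "\<not>(b \<and> a) \<and> \<not>(b \<and> c) \<and> \<not>(b \<and> d) \<and> \<not>(a \<and> c) \<and> \<not>(a \<and> d) \<and> \<not>(c \<and> d)"
    using A(2-7) unfolding m1 e3 a_def b_def c_def d_def by blast
  have h3: "a \<or> b \<or> e \<or> f" using Bm(1) unfolding m2 e3 minus_minus a_def b_def e_def f_def .
  have h4: "\<not>(a \<and> b) \<and> \<not>(a \<and> e) \<and> \<not>(a \<and> f) \<and> \<not>(b \<and> e) \<and> \<not>(b \<and> f) \<and> \<not>(e \<and> f)"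
    using Bm(2-7) unfolding m2 e3 minus_minus a_def b_def e_def f_def by blast
  have h5: "\<not>(e \<and> c)" using Cc(2) unfolding e_def c_def .
  have h6: "\<not>(f \<and> d)" using Dd(2) unfolding f_def d_def .
  have "d \<longleftrightarrow> e" using h1 h2 h3 h4 h5 h6 by blast
  thus ?thesis unfolding d_def e_def .
qed

lemma iter:
  fixes p i2 i3 :: int
  assumes perf: "perfect_B_m13 p B" and pr: "prime p" and p3: "p > 3" and i2: "[2*i2 = 1] (mod p)"
    and i3: "[3*i3 = 1] (mod p)"
  shows "\<not> p dvd y \<Longrightarrow> (((2*i3)^k * y) mod p \<in> B \<longleftrightarrow> ((-1)^k * y) mod p \<in> B)"
proof (induction k arbitrary: y)
  case 0 thus ?case by simp
next
  case (Suc k)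
  have n2: "\<not> p dvd 2" using p3 zdvd_imp_le[of p 2] by linarith
  have ni3: "\<not> p dvd i3"
  proof
    assume "p dvd i3" hence "p dvd 3*i3" by simp
    hence "p dvd 1" using i3 by (metis cong_dvd_iff)
    thus False using p3 by simp
  qed
  have dv: "\<not> p dvd 2*i3*y" using n2 Suc.prems ni3 pr by (simp add: prime_dvd_mult_iff)
  have dk: "\<not> p dvd (-1)^k*y" using Suc.prems by (cases "even k") auto
  have "(2*i3)^(Suc k) * y = (2*i3)^k * (2*i3*y)" by (simp only: power_Suc mult_ac)
  hence "((2*i3)^(Suc k) * y) mod p \<in> B \<longleftrightarrow> ((-1)^k * (2*i3*y)) mod p \<in> B"
    using Suc.IH[OF dv] by (simp only:)
  also have "(-1)^k * (2*i3*y) = 2*i3*((-1)^k*y)" by simp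
  also have "(2*i3*((-1)^k*y)) mod p \<in> B \<longleftrightarrow> (-((-1)^k*y)) mod p \<in> B"
    by (rule flip[OF perf pr p3 i2 i3 dk])
  finally show ?case by simp
qed

lemma no_sym:
  fixes p i2 i3 :: int
  assumes perf: "perfect_B_m13 p B" and pr: "prime p" and p3: "p > 3" and i2: "[2*i2 = 1] (mod p)"
    and i3: "[3*i3 = 1] (mod p)"
    and sym: "\<And>y. \<not> p dvd y \<Longrightarrow> (y mod p \<in> B \<longleftrightarrow> (-y) mod p \<in> B)"
  shows False
proof -
  have p0: "p > 0" using p3 by simp
  have n1: "\<not> p dvd 1" using p3 by simp
  have nd: "\<not> p dvd i" if "[c*i = 1] (mod p)" for c i
  proof
    assume "p dvd i" hence "p dvd c*i" by simp
    hence "p dvd 1" using that by (metis cong_dvd_iff)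
    thus False using p3 by simp
  qed
  from exactly(1)[OF perf p0 i2 i3 n1]
  obtain z where z: "z mod p \<in> B" "\<not> p dvd z"
    using nd[OF i2] nd[OF i3] n1 by auto
  have "(-z) mod p \<in> B" using sym[OF z(2)] z(1) by simp
  thus False using exactly(2)[OF perf p0 i2 i3 z(2)] z(1) by simp
qed

lemma contra:
  fixes p i2 i3 :: int
  assumes perf: "perfect_B_m13 p B" and pr: "prime p" and p3: "p > 3" and i2: "[2*i2 = 1] (mod p)"
    and i3: "[3*i3 = 1] (mod p)"
    and k: "(odd k \<and> [(2*i3)^k = 1] (mod p)) \<or> (even k \<and> [(2*i3)^k = -1] (mod p))"
  shows False
proof (rule no_sym[OF perf pr p3 i2 i3])
  fix y :: int assume y: "\<not> p dvd y"
  note it = iter[OF perf pr p3 i2 i3 y, of k]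
  show "y mod p \<in> B \<longleftrightarrow> (-y) mod p \<in> B"
  proof (cases "odd k")
    case True
    hence "[(2*i3)^k = 1] (mod p)" using k by auto
    hence "[(2*i3)^k * y = 1 * y] (mod p)" by (rule cong_scalar_right)
    hence "((2*i3)^k * y) mod p = y mod p" by (simp add: cong_def)
    thus ?thesis using it True by simp
  next
    case False
    hence "[(2*i3)^k = -1] (mod p)" using k by auto
    hence "[(2*i3)^k * y = (-1) * y] (mod p)" by (rule cong_scalar_right)
    hence "((2*i3)^k * y) mod p = (-y) mod p" by (simp add: cong_def)
    thus ?thesis using it False by simp
  qed
qed

lemma sq_one:
  fixes p z :: int assumes "prime p" "[z^2 = 1] (mod p)"
  shows "[z = 1] (mod p) \<or> [z = -1] (mod p)"
proof -
  have "p dvd z^2 - 1" using assms(2) by (simp add: cong_iff_dvd_diff)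
  moreover have "z^2 - 1 = (z - 1) * (z + 1)" by (simp add: power2_eq_square algebra_simps)
  ultimately have "p dvd (z - 1) \<or> p dvd (z + 1)" using assms(1) by (simp add: prime_dvd_mult_iff)
  thus ?thesis by (auto simp: cong_iff_dvd_diff)
qed

theorem theorem4p6:
  fixes p :: int
  assumes "prime p" and "odd p" and "[p = 5] (mod 8)"
  shows "(\<exists>B. perfect_B_m13 p B) \<longleftrightarrow> (\<exists>x::int. [x ^ 4 = 6] (mod p))"
proof -
  have pr: "prime p" by fact
  define k where "k = p div 8"
  have pk: "p = 8*k+5" using assms(3) unfolding k_def cong_def by presburger
  have p1: "p > 1" using pr prime_gt_1_int by blast
  have k0: "k \<ge> 0" using p1 pk by linarith
  have p3: "p > 3" using pk k0 by linarith
  define M where "M = nat (2*k+1)"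
  have M0: "M > 0" and oddM: "odd M" using k0 unfolding M_def by (auto simp: even_nat_iff)
  have np: "nat p - 1 = 4*M" using pk k0 unfolding M_def by simp
  obtain g where G1: "\<And>i j. [g^i = g^j] (mod p) \<longleftrightarrow> [i = j] (mod (4*M))"
    and G2: "\<And>x. \<not> p dvd x \<Longrightarrow> \<exists>i < 4*M. [g^i = x] (mod p)"
    using generator[OF pr] unfolding np by metis
  have ndv: "\<not> p dvd x" if "x \<in> {1,2,3,6}" for x :: int
  proof
    assume d: "p dvd x"
    have "\<exists>y::int. y \<in> {1,2,3} \<and> p dvd y"
    proof (cases "x = 6")
      case True
      hence "p dvd 2 * 3" using d by simp
      hence "p dvd 2 \<or> p dvd 3" using pr prime_dvd_mult_iff by blast
      thus ?thesis by blast
    qed (use that d in auto)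
    then obtain y :: int where "y \<in> {1,2,3}" "p dvd y" by blast
    hence "p \<le> y" using zdvd_imp_le[of p y] by auto
    thus False using \<open>y \<in> {1,2,3}\<close> p3 by auto
  qed
  have g1: "[g^(4*M) = 1] (mod p)" using G1[of "4*M" 0] by (simp add: cong_def)
  have gm: "[g^(2*M) = -1] (mod p)"
  proof -
    have "[(g^(2*M))^2 = 1] (mod p)" using g1 by (simp add: power_mult[symmetric] mult.commute mult.left_commute)
    moreover have "\<not> [g^(2*M) = 1] (mod p)"
      using G1[of "2*M" 0] M0 by (simp add: cong_def)
    ultimately show ?thesis using sq_one[OF pr] by blast
  qed
  obtain e2 where e2: "e2 < 4*M" "[g^e2 = 2] (mod p)" using G2[OF ndv[of 2]] by auto
  obtain e3 where e3: "e3 < 4*M" "[g^e3 = 3] (mod p)" using G2[OF ndv[of 3]] by auto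
  have odd2: "odd e2"
  proof
    assume ev: "even e2"
    have "[2 ^ nat (4*k+2) = -1] (mod p)" by (rule two_nonres[OF pr pk])
    moreover have "nat (4*k+2) = 2*M" unfolding M_def using k0 by simp
    ultimately have "[2 ^ (2*M) = -1] (mod p)" by simp
    moreover have "[g^(e2*(2*M)) = 2^(2*M)] (mod p)" using cong_pow[OF e2(2), of "2*M"] by (simp only: power_mult)
    ultimately have "[g^(e2*(2*M)) = g^(2*M)] (mod p)" using gm by (metis cong_sym cong_trans)
    hence "[e2*(2*M) = 2*M] (mod (4*M))" using G1 by blast
    moreover from ev obtain t where "e2 = 2*t" by blast
    ultimately have "[t*(4*M) = 2*M] (mod (4*M))" by (simp add: mult_ac)
    hence "(2*M) mod (4*M) = 0" by (simp add: cong_def)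
    thus False using M0 by simp
  qed
  have quart: "(\<exists>x::int. [x ^ 4 = 6] (mod p)) \<longleftrightarrow> 4 dvd (e2 + e3)"
  proof
    assume "\<exists>x::int. [x ^ 4 = 6] (mod p)"
    then obtain x :: int where x: "[x^4 = 6] (mod p)" by blast
    have "\<not> p dvd x"
    proof
      assume "p dvd x" hence "p dvd x * x^3" by simp
      moreover have "x * x^3 = x^4" by (simp add: eval_nat_numeral)
      ultimately have "p dvd x^4" by simp
      hence "p dvd 6" using x by (metis cong_dvd_iff)
      thus False using ndv[of 6] by simp
    qed
    then obtain j where j: "[g^j = x] (mod p)" using G2 by blast
    have "[g^(4*j) = x^4] (mod p)" using cong_pow[OF j, of 4] by (simp add: power_mult mult.commute)
    moreover have "[g^(e2+e3) = 2*3] (mod p)" using cong_mult[OF e2(2) e3(2)] by (simp add: power_add)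
    moreover have x6: "[x^4 = 2*3] (mod p)" using x by simp
    ultimately have "[g^(4*j) = g^(e2+e3)] (mod p)" using cong_trans cong_sym by meson
    hence "[4*j = e2+e3] (mod (4*M))" using G1 by blast
    hence "[4*j = e2+e3] (mod 4)" by (rule cong_dvd_modulus_nat) simp
    thus "4 dvd (e2+e3)" by (simp add: cong_def dvd_eq_mod_eq_0)
  next
    assume "4 dvd (e2+e3)"
    then obtain t where t: "e2 + e3 = 4*t" by blast
    have "[(g^t)^4 = g^(e2+e3)] (mod p)" by (simp add: t power_mult[symmetric] mult.commute)
    moreover have "[g^(e2+e3) = 2*3] (mod p)" using cong_mult[OF e2(2) e3(2)] by (simp add: power_add)
    ultimately have "[(g^t)^4 = 6] (mod p)" using cong_trans by fastforce
    thus "\<exists>x::int. [x ^ 4 = 6] (mod p)" by blast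
  qed
  have gnd: "\<not> p dvd g"
  proof
    assume "p dvd g"
    hence g0: "[g = 0] (mod p)" by (simp add: cong_0_iff)
    have "[g^2 = 0^2] (mod p)" using cong_pow[OF g0, of 2] .
    hence "[g^1 = g^2] (mod p)" using g0 by (simp add: cong_def)
    hence "[1 = (2::nat)] (mod (4*M))" using G1 by blast
    thus False using M0 by (simp add: cong_def)
  qed
  have gpnd: "\<not> p dvd g^i" for i using gnd prime_dvd_power[OF pr] by blast
  have inv: "[c * g^(4*M - e) = 1] (mod p)" if "[g^e = c] (mod p)" "e < 4*M" for c e
  proof -
    have "[g^e * g^(4*M - e) = c * g^(4*M - e)] (mod p)" using that(1) by (rule cong_scalar_right)
    moreover have "g^e * g^(4*M - e) = g^(4*M)" using that(2) by (simp add: power_add[symmetric])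
    ultimately show ?thesis using g1 cong_trans cong_sym by metis
  qed
  have fwd: "4 dvd (e2 + e3)" if "perfect_B_m13 p B" for B
  proof -
    define i2 where "i2 = g^(4*M - e2)"
    define i3 where "i3 = g^(4*M - e3)"
    have i2: "[2*i2 = 1] (mod p)" unfolding i2_def by (rule inv[OF e2(2) e2(1)])
    have i3: "[3*i3 = 1] (mod p)" unfolding i3_def by (rule inv[OF e3(2) e3(1)])
    define ev where "ev = e2 + (4*M - e3)"
    have v: "[g^ev = 2*i3] (mod p)" unfolding ev_def i3_def power_add
      using e2(2) by (rule cong_scalar_right)
    have vk: "[(2*i3)^k = g^(ev*k)] (mod p)" for k
      using cong_pow[OF cong_sym[OF v], of k] by (simp add: power_mult)
    have "ev mod 4 = 2"
    proof (rule ccontr)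
      assume ne: "ev mod 4 \<noteq> 2"
      show False
      proof (cases "even ev")
        case True
        hence "ev mod 4 = 0" using ne by presburger
        then obtain s where s: "ev = 4*s" by auto
        have "[ev*M = 0] (mod (4*M))" unfolding s by (simp add: cong_def)
        hence "[g^(ev*M) = g^0] (mod p)" using G1 by blast
        hence "[(2*i3)^M = 1] (mod p)" using vk[of M] cong_trans by fastforce
        thus False using contra[OF that pr p3 i2 i3, of M] oddM by blast
      next
        case False
        hence "odd (ev*ev)" by simp
        then obtain s where s: "ev*ev = 2*s+1" by (metis oddE)
        have "ev*(2*M*ev) = s*(4*M) + 2*M"
        proof -
          have "ev*(2*M*ev) = 2*M*(ev*ev)" by (simp add: mult_ac)
          thus ?thesis using s by (simp add: algebra_simps)
        qed
        hence "[ev*(2*M*ev) = 2*M] (mod (4*M))" by (simp add: cong_def)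
        hence "[g^(ev*(2*M*ev)) = g^(2*M)] (mod p)" using G1 by blast
        hence "[(2*i3)^(2*M*ev) = -1] (mod p)" using vk[of "2*M*ev"] gm cong_trans by metis
        thus False using contra[OF that pr p3 i2 i3, of "2*M*ev"] by simp
      qed
    qed
    moreover have "ev + e3 = e2 + 4*M" using e3(1) unfolding ev_def by simp
    ultimately show ?thesis using odd2 by presburger
  qed
  have bwd: "\<exists>B. perfect_B_m13 p B" if h4: "4 dvd (e2 + e3)"
  proof -
    define B where "B = {x \<in> {1..<p}. \<exists>i. [g^(4*i) = x] (mod p)}"
    define ind :: "int \<Rightarrow> nat" where
      "ind a = (if a = -1 then 2*M else if a = 1 then 0 else if a = 2 then e2 else e3)" for a
    have iv: "ind 1 = 0" "ind (-1) = 2*M" "ind 2 = e2" "ind 3 = e3" by (simp_all add: ind_def)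
    have A4: "a = -1 \<or> a = 1 \<or> a = 2 \<or> a = 3" if "a \<in> {-1,1,2,3}" for a :: int
      using that by simp
    have indc: "[g^(ind a) = a] (mod p)" if "a \<in> {-1,1,2,3}" for a
      using A4[OF that] apply (elim disjE)
      using gm e2(2) e3(2) iv by simp_all
    have indl: "ind a < 4*M" if "a \<in> {-1,1,2,3}" for a
      using A4[OF that] apply (elim disjE)
      using e2(1) e3(1) M0 iv by simp_all
    have M2: "(2*M) mod 4 = 2" using oddM by presburger
    have e23: "(e2 mod 4 = 1 \<and> e3 mod 4 = 3) \<or> (e2 mod 4 = 3 \<and> e3 mod 4 = 1)"
      using odd2 h4 by presburger
    have r1: "ind (-1) mod 4 = 2" using M2 iv by simp
    have r2: "ind 1 mod 4 = 0" using iv by simp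
    have r3: "ind 2 mod 4 = 1 \<or> ind 2 mod 4 = 3" using e23 iv by auto
    have r4: "ind 3 mod 4 = 1 \<or> ind 3 mod 4 = 3" using e23 iv by auto
    have r5: "ind 3 mod 4 \<noteq> ind 2 mod 4" using e23 iv by auto
    have inddist: "a = a'" if "a \<in> {-1,1,2,3}" "a' \<in> {-1,1,2,3}" "ind a mod 4 = ind a' mod 4" for a a'
      using that(3) apply -
      using that(1,2) apply (simp only: insert_iff empty_iff simp_thms)
      apply (elim disjE)
      using r1 r2 r3 r4 r5 by auto
    have indsurj: "\<exists>a \<in> {-1,1,2,3}. ind a mod 4 = j mod 4" for j
    proof -
      have "j mod 4 < 4" by simp
      hence "j mod 4 = 0 \<or> j mod 4 = 1 \<or> j mod 4 = 2 \<or> j mod 4 = 3" by linarith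
      hence "j mod 4 = 0 \<or> j mod 4 = 2 \<or> j mod 4 = e2 mod 4 \<or> j mod 4 = e3 mod 4" using e23 by auto
      thus ?thesis
      proof (elim disjE)
        assume "j mod 4 = 0" thus ?thesis using iv by (intro bexI[of _ 1]) auto
      next
        assume "j mod 4 = 2" thus ?thesis using iv M2 by (intro bexI[of _ "-1"]) auto
      next
        assume "j mod 4 = e2 mod 4" thus ?thesis using iv by (intro bexI[of _ 2]) auto
      next
        assume "j mod 4 = e3 mod 4" thus ?thesis using iv by (intro bexI[of _ 3]) auto
      qed
    qed
    have and0: "\<not> p dvd a" if "a \<in> {-1,1,2,3}" for a
      using A4[OF that] apply (elim disjE)
      using ndv[of 1] ndv[of 2] ndv[of 3] by simp_all
    have Bp: "B \<subseteq> {0..<p}" unfolding B_def by auto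
    have bnd: "\<not> p dvd b" if "b \<in> B" for b
    proof
      assume "p dvd b"
      moreover have "1 \<le> b" "b < p" using that by (auto simp: B_def)
      ultimately show False using zdvd_imp_le[of p b] by auto
    qed
    have nz: "\<forall>a \<in> {-1, 1, 2, 3}. \<forall>b \<in> B. (a * b) mod p \<noteq> 0"
    proof (intro ballI)
      fix a b :: int assume a: "a \<in> {-1, 1, 2, 3}" and b: "b \<in> B"
      have "\<not> p dvd a * b" using and0[OF a] bnd[OF b] pr by (simp add: prime_dvd_mult_iff)
      thus "(a * b) mod p \<noteq> 0" by (simp add: dvd_eq_mod_eq_0)
    qed
    have rep: "\<exists>!(a, b). a \<in> {-1, 1, 2, 3} \<and> b \<in> B \<and> (a * b) mod p = y" if y: "y \<in> {1..<p}" for y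
    proof -
      have ynd: "\<not> p dvd y" using y zdvd_imp_le[of p y] by auto
      obtain j where j: "j < 4*M" "[g^j = y] (mod p)" using G2[OF ynd] by blast
      obtain a where a: "a \<in> {-1,1,2,3}" "ind a mod 4 = j mod 4" using indsurj by blast
      define i where "i = j div 4 + M - ind a div 4"
      have i4: "ind a + 4*i = j + 4*M"
      proof -
        have "ind a = 4*(ind a div 4) + ind a mod 4" "j = 4*(j div 4) + j mod 4" by simp_all
        moreover have "ind a div 4 \<le> M" using indl[OF a(1)] by linarith
        ultimately show ?thesis using a(2) unfolding i_def by linarith
      qed
      define b where "b = g^(4*i) mod p"
      have bB: "b \<in> B"
      proof -
        have "b \<noteq> 0" using gpnd[of "4*i"] unfolding b_def by (simp add: dvd_eq_mod_eq_0)
        moreover have "0 \<le> b" "b < p" using p1 unfolding b_def by auto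
        moreover have "[g^(4*i) = b] (mod p)" unfolding b_def by (simp add: cong_def)
        ultimately show ?thesis unfolding B_def by auto
      qed
      have abg: "[a * b = g^(ind a + 4*i)] (mod p)"
      proof -
        have "[a * b = g^(ind a) * g^(4*i)] (mod p)"
          using cong_mult[OF cong_sym[OF indc[OF a(1)]], of b "g^(4*i)"]
          unfolding b_def by (simp add: cong_def mod_mult_right_eq)
        thus ?thesis by (simp add: power_add)
      qed
      have "[g^(ind a + 4*i) = g^j] (mod p)" using G1 unfolding i4 by (simp add: cong_def)
      hence "[a * b = y] (mod p)" using abg j(2) cong_trans by metis
      hence aby: "(a * b) mod p = y" using y by (simp add: cong_def)
      show ?thesis
      proof (rule ex1I[of _ "(a, b)"])
        show "case (a, b) of (a, b) \<Rightarrow> a \<in> {-1, 1, 2, 3} \<and> b \<in> B \<and> (a * b) mod p = y"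
          using a bB aby by simp
      next
        fix z assume z: "case z of (a, b) \<Rightarrow> a \<in> {-1, 1, 2, 3} \<and> b \<in> B \<and> (a * b) mod p = y"
        obtain a' b' where zab: "z = (a', b')" by (cases z)
        have a': "a' \<in> {-1,1,2,3}" and b': "b' \<in> B" and ab': "(a' * b') mod p = y" using z zab by auto
        obtain i' where i': "[g^(4*i') = b'] (mod p)" using b' unfolding B_def by auto
        have "[g^(ind a' + 4*i') = a' * b'] (mod p)"
          using cong_mult[OF indc[OF a'] i'] by (simp add: power_add)
        moreover have "[a' * b' = a * b] (mod p)" using ab' aby by (simp add: cong_def)
        ultimately have "[g^(ind a' + 4*i') = g^(ind a + 4*i)] (mod p)"
          using abg cong_trans cong_sym by metis
        hence "[ind a' + 4*i' = ind a + 4*i] (mod (4*M))" using G1 by blast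
        hence "[ind a' + 4*i' = ind a + 4*i] (mod 4)" by (rule cong_dvd_modulus_nat) simp
        hence "ind a' mod 4 = ind a mod 4" unfolding cong_def by simp
        hence aa: "a' = a" using inddist[OF a' a(1)] by simp
        have "[a * b' = a * b] (mod p)" using ab' aby aa by (simp add: cong_def)
        moreover have "coprime a p" using and0[OF a(1)] prime_imp_coprime[OF pr] coprime_commute by blast
        ultimately have "[b' = b] (mod p)" by (simp add: cong_mult_lcancel)
        hence "b' = b" using Bp b' bB by (intro cong_less_imp_eq_int) auto
        thus "z = (a, b)" using zab aa by simp
      qed
    qed
    have "perfect_B_m13 p B" unfolding perfect_B_m13_def
    proof (intro conjI)
      show "\<forall>y\<in>{1..<p}. \<exists>!(a, b). a \<in> {- 1, 1, 2, 3} \<and> b \<in> B \<and> (a * b) mod p = y"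
        using rep by (intro ballI)
    qed (fact Bp, fact nz)
    thus ?thesis by blast
  qed
  show ?thesis using quart fwd bwd by blast
qed

end
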